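(* Let $\Gamma\subseteq A$ be $\Bbbk$-algebras, $\sim$ an equivalence relation on $\mathrm{cfs}(\Gamma)$, and suppose $\Gamma$ is a Harish-Chandra block subalgebra of $A$ with respect to $\sim$. Let $V$ be an $A$-module and $v\in V$ with $\mathfrak m_1\cdots\mathfrak m_kv=0$, where $B\in\mathrm{cfs}(\Gamma)/{\sim}$ and $\mathfrak m_1,\dots,\mathfrak m_k\in B$. Then $$Av\subseteq\bigoplus_{C\in\bigcup_{i}\mathrm{Supp}(A/A\mathfrak m_i)}V(C).$$
   Context: $\mathrm{cfs}(\Gamma)$: maximal two-sided ideals $\mathfrak m$ of $\Gamma$ with $\dim\Gamma/\mathfrak m<\infty$. For a class $B$, $\mathcal W(B)=\{\mathfrak m_1\cdots\mathfrak m_k:k\ge0,\mathfrak m_i\in B\}$; for a $\Gamma$-module $V$, $V(B)=\{v:\mathfrak m v=0$ for some $\mathfrak m\in\mathcal W(B)\}$ (these sum directly). $V$ is a block module if $V=\bigoplus_BV(B)$; $\mathrm{Supp}(V)=\{B:V(B)\neq0\}$. $\Gamma$ is a Harish-Chandra block subalgebra of $A$ if the left $A$-module $A/A\mathfrak m$ is a block module over $\Gamma$ for every $B$ and every $\mathfrak m\in\mathcal W(B)$. *)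

theory Defs
  imports Complex_Main
begin

text \<open>A unital associative algebra over the field 'k: the ring 'a (the whole type is A)
  together with a scalar multiplication making it a 'k-vector space, compatible with the
  ring multiplication.\<close>
definition k_algebra :: "('k::field \<Rightarrow> 'a::ring_1 \<Rightarrow> 'a) \<Rightarrow> bool" where
  "k_algebra scale \<longleftrightarrow> vector_space scale \<and>
     (\<forall>c x y. scale c (x * y) = scale c x * y \<and> scale c (x * y) = x * scale c y)"

definition subalgebra :: "('k::field \<Rightarrow> 'a::ring_1 \<Rightarrow> 'a) \<Rightarrow> 'a set \<Rightarrow> bool" where
  "subalgebra scale G \<longleftrightarrow> 0 \<in> G \<and> 1 \<in> G \<and>
     (\<forall>x\<in>G. \<forall>y\<in>G. x + y \<in> G \<and> x * y \<in> G) \<and> (\<forall>c. \<forall>x\<in>G. scale c x \<in> G)"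

definition two_sided_ideal :: "'a::ring_1 set \<Rightarrow> 'a set \<Rightarrow> bool" where
  "two_sided_ideal G m \<longleftrightarrow> m \<subseteq> G \<and> 0 \<in> m \<and>
     (\<forall>x\<in>m. \<forall>y\<in>m. x + y \<in> m) \<and> (\<forall>x\<in>m. - x \<in> m) \<and>
     (\<forall>g\<in>G. \<forall>x\<in>m. g * x \<in> m \<and> x * g \<in> m)"

definition maximal_ideal :: "'a::ring_1 set \<Rightarrow> 'a set \<Rightarrow> bool" where
  "maximal_ideal G m \<longleftrightarrow> two_sided_ideal G m \<and> m \<noteq> G \<and>
     (\<forall>J. two_sided_ideal G J \<and> m \<subseteq> J \<longrightarrow> J = m \<or> J = G)"

definition finite_codim :: "('k::field \<Rightarrow> 'a::ring_1 \<Rightarrow> 'a) \<Rightarrow> 'a set \<Rightarrow> 'a set \<Rightarrow> bool" where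
  "finite_codim scale G m \<longleftrightarrow> (\<exists>S. finite S \<and> S \<subseteq> G \<and>
     G \<subseteq> {s + x | s x. s \<in> module.span scale S \<and> x \<in> m})"

definition cfs :: "('k::field \<Rightarrow> 'a::ring_1 \<Rightarrow> 'a) \<Rightarrow> 'a set \<Rightarrow> 'a set set" where
  "cfs scale G = {m. maximal_ideal G m \<and> finite_codim scale G m}"

definition ideal_mult :: "'a::ring_1 set \<Rightarrow> 'a set \<Rightarrow> 'a set" where
  "ideal_mult I J = {(\<Sum>i<n. f i * g i) | (n::nat) f g. \<forall>i<n. f i \<in> I \<and> g i \<in> J}"

fun ideal_prod :: "'a::ring_1 set \<Rightarrow> 'a set list \<Rightarrow> 'a set" where
  "ideal_prod G [] = G"
| "ideal_prod G (m # ms) = ideal_mult m (ideal_prod G ms)"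

definition words :: "'a::ring_1 set \<Rightarrow> 'a set set \<Rightarrow> 'a set set" where
  "words G B = {ideal_prod G ms | ms. set ms \<subseteq> B}"

text \<open>Modules are described by an action act on an abelian group 'v together with a
  predicate z singling out the elements that are zero in the module: z = (\<lambda>w. w = 0) for an
  honest module, z = (\<lambda>x. x \<in> L) for a quotient A/L by a left submodule L.\<close>

definition A_module :: "('a::ring_1 \<Rightarrow> 'v::ab_group_add \<Rightarrow> 'v) \<Rightarrow> bool" where
  "A_module act \<longleftrightarrow> (\<forall>x y v. act (x + y) v = act x v + act y v) \<and>
     (\<forall>x v w. act x (v + w) = act x v + act x w) \<and>
     (\<forall>x y v. act (x * y) v = act x (act y v)) \<and> (\<forall>v. act 1 v = v)"

definition part :: "'a::ring_1 set \<Rightarrow> ('a \<Rightarrow> 'v::ab_group_add \<Rightarrow> 'v) \<Rightarrow> ('v \<Rightarrow> bool)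
    \<Rightarrow> 'a set set \<Rightarrow> 'v set" where
  "part G act z B = {v. \<exists>m\<in>words G B. \<forall>x\<in>m. z (act x v)}"

definition block_sum :: "'a::ring_1 set \<Rightarrow> ('a \<Rightarrow> 'v::ab_group_add \<Rightarrow> 'v) \<Rightarrow> ('v \<Rightarrow> bool)
    \<Rightarrow> 'a set set set \<Rightarrow> 'v set" where
  "block_sum G act z Cs = {v. \<exists>Fs f. finite Fs \<and> Fs \<subseteq> Cs \<and>
      (\<forall>C\<in>Fs. f C \<in> part G act z C) \<and> z (v - (\<Sum>C\<in>Fs. f C))}"

definition block_module :: "('k::field \<Rightarrow> 'a::ring_1 \<Rightarrow> 'a) \<Rightarrow> 'a set \<Rightarrow> ('a set \<times> 'a set) set
    \<Rightarrow> ('a \<Rightarrow> 'v::ab_group_add \<Rightarrow> 'v) \<Rightarrow> ('v \<Rightarrow> bool) \<Rightarrow> bool" where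
  "block_module scale G R act z \<longleftrightarrow> (\<forall>v. v \<in> block_sum G act z (cfs scale G // R))"

definition Supp :: "('k::field \<Rightarrow> 'a::ring_1 \<Rightarrow> 'a) \<Rightarrow> 'a set \<Rightarrow> ('a set \<times> 'a set) set
    \<Rightarrow> ('a \<Rightarrow> 'v::ab_group_add \<Rightarrow> 'v) \<Rightarrow> ('v \<Rightarrow> bool) \<Rightarrow> 'a set set set" where
  "Supp scale G R act z = {C \<in> cfs scale G // R. \<exists>v \<in> part G act z C. \<not> z v}"

text \<open>The left A-module A/Am: A acting on itself by left multiplication, modulo the left
  ideal Am = ideal_mult UNIV m.\<close>
definition HC_block_subalgebra :: "('k::field \<Rightarrow> 'a::ring_1 \<Rightarrow> 'a) \<Rightarrow> 'a set
    \<Rightarrow> ('a set \<times> 'a set) set \<Rightarrow> bool" where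
  "HC_block_subalgebra scale G R \<longleftrightarrow>
     (\<forall>B \<in> cfs scale G // R. \<forall>m \<in> words G B.
        block_module scale G R (*) (\<lambda>x. x \<in> ideal_mult UNIV m))"

end

theory Submission
  imports Defs
begin

lemma sum_split_add:
  fixes h :: "nat \<Rightarrow> 'b::comm_monoid_add"
  shows "(\<Sum>i<n1+n2. h i) = (\<Sum>i<n1. h i) + (\<Sum>i<n2. h (n1 + i))"
  by (induction n2) (auto simp: add.assoc)

lemma ideal_multI:
  "x = (\<Sum>i<(n::nat). f i * g i) \<Longrightarrow> \<forall>i<n. f i \<in> I \<and> g i \<in> J \<Longrightarrow> x \<in> ideal_mult I J"
  unfolding ideal_mult_def by blast

lemma ideal_mult_add:
  assumes "x \<in> ideal_mult I J" "y \<in> ideal_mult I J"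
  shows "x + y \<in> ideal_mult I J"
proof -
  obtain n1 f1 g1 where x: "x = (\<Sum>i<(n1::nat). f1 i * g1 i)" "\<forall>i<n1. f1 i \<in> I \<and> g1 i \<in> J"
    using assms(1) unfolding ideal_mult_def by blast
  obtain n2 f2 g2 where y: "y = (\<Sum>i<(n2::nat). f2 i * g2 i)" "\<forall>i<n2. f2 i \<in> I \<and> g2 i \<in> J"
    using assms(2) unfolding ideal_mult_def by blast
  define f where "f i = (if i < n1 then f1 i else f2 (i - n1))" for i
  define g where "g i = (if i < n1 then g1 i else g2 (i - n1))" for i
  have "x + y = (\<Sum>i<n1+n2. f i * g i)"
    unfolding sum_split_add x y f_def g_def by simp
  moreover have "\<forall>i<n1+n2. f i \<in> I \<and> g i \<in> J"
    using x y unfolding f_def g_def by auto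
  ultimately show ?thesis by (rule ideal_multI)
qed

lemma ideal_mult_zero: "0 \<in> ideal_mult I J"
  unfolding ideal_mult_def by force

lemma ideal_mult_single: "x \<in> I \<Longrightarrow> y \<in> J \<Longrightarrow> x * y \<in> ideal_mult I J"
  unfolding ideal_mult_def
  by (rule CollectI, rule exI[of _ 1], rule exI[of _ "\<lambda>_. x"], rule exI[of _ "\<lambda>_. y"]) auto

definition wideal :: "'a::ring_1 set \<Rightarrow> 'a set \<Rightarrow> bool" where
 "wideal G w \<longleftrightarrow> w \<subseteq> G \<and> 0 \<in> w \<and> (\<forall>x\<in>w. \<forall>y\<in>w. x+y \<in> w) \<and> (\<forall>g\<in>G. \<forall>x\<in>w. g*x \<in> w \<and> x*g \<in> w)"

lemma sum_closed:
  assumes "0 \<in> w" "\<forall>x\<in>w. \<forall>y\<in>w. x+y \<in> w" "\<forall>i<n. h i \<in> w"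
  shows "(\<Sum>i<(n::nat). h i) \<in> w"
  using assms(3) by (induction n) (auto simp: assms(1,2))

lemma wideal_mult:
  assumes G: "subalgebra scale G" and I: "wideal G I" and J: "wideal G J"
  shows "wideal G (ideal_mult I J)"
proof -
  have G0: "0 \<in> G" and Gc: "\<forall>x\<in>G. \<forall>y\<in>G. x + y \<in> G \<and> x * y \<in> G"
    using G unfolding subalgebra_def by auto
  have sub: "ideal_mult I J \<subseteq> G"
  proof
    fix x assume "x \<in> ideal_mult I J"
    then obtain n f g where x: "x = (\<Sum>i<(n::nat). f i * g i)" "\<forall>i<n. f i \<in> I \<and> g i \<in> J"
      unfolding ideal_mult_def by blast
    have IG: "I \<subseteq> G" and JG: "J \<subseteq> G" using I J unfolding wideal_def by auto
    have "\<forall>i<n. f i * g i \<in> G"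
    proof (intro allI impI)
      fix i assume "i < n"
      then have "f i \<in> G" "g i \<in> G" using x(2) IG JG by auto
      then show "f i * g i \<in> G" using Gc by blast
    qed
    moreover have Gadd: "\<forall>x\<in>G. \<forall>y\<in>G. x + y \<in> G" using Gc by blast
    ultimately show "x \<in> G" unfolding x(1) using sum_closed[OF G0 Gadd] by simp
  qed
  have lr: "g * x \<in> ideal_mult I J \<and> x * g \<in> ideal_mult I J" if gG: "g \<in> G" and xI: "x \<in> ideal_mult I J" for g x
  proof -
    obtain n f h where x: "x = (\<Sum>i<(n::nat). f i * h i)" "\<forall>i<n. f i \<in> I \<and> h i \<in> J"
      using xI unfolding ideal_mult_def by blast
    have "g * x = (\<Sum>i<n. (g * f i) * h i)" unfolding x by (simp add: sum_distrib_left mult.assoc)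
    moreover have "\<forall>i<n. g * f i \<in> I \<and> h i \<in> J" using x(2) I gG unfolding wideal_def by blast
    ultimately have 1: "g * x \<in> ideal_mult I J" by (rule ideal_multI)
    have "x * g = (\<Sum>i<n. f i * (h i * g))" unfolding x by (simp add: sum_distrib_right mult.assoc)
    moreover have "\<forall>i<n. f i \<in> I \<and> h i * g \<in> J" using x(2) J gG unfolding wideal_def by blast
    ultimately have 2: "x * g \<in> ideal_mult I J" by (rule ideal_multI)
    show ?thesis using 1 2 by blast
  qed
  show ?thesis unfolding wideal_def using sub lr ideal_mult_add ideal_mult_zero by blast
qed

lemma wideal_G: "subalgebra scale G \<Longrightarrow> wideal G G"
  unfolding subalgebra_def wideal_def by auto

lemma two_sided_wideal: "two_sided_ideal G m \<Longrightarrow> wideal G m"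
  unfolding two_sided_ideal_def wideal_def by auto

lemma wideal_prod:
  assumes "subalgebra scale G" "\<forall>m\<in>set ms. two_sided_ideal G m"
  shows "wideal G (ideal_prod G ms)"
  using assms(2) by (induction ms) (auto intro: wideal_mult[OF assms(1)] two_sided_wideal wideal_G[OF assms(1)])

lemma ideal_prod_single:
  assumes "two_sided_ideal G m" "1 \<in> G"
  shows "ideal_prod G [m] = m"
proof
  show "ideal_prod G [m] \<subseteq> m"
  proof
    fix x assume "x \<in> ideal_prod G [m]"
    then obtain n f g where x: "x = (\<Sum>i<(n::nat). f i * g i)" "\<forall>i<n. f i \<in> m \<and> g i \<in> G"
      by (auto simp: ideal_mult_def)
    have "\<forall>i<n. f i * g i \<in> m" using x(2) assms(1) unfolding two_sided_ideal_def by blast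
    moreover have "0 \<in> m" "\<forall>x\<in>m. \<forall>y\<in>m. x + y \<in> m" using assms(1) unfolding two_sided_ideal_def by auto
    ultimately show "x \<in> m" unfolding x(1) using sum_closed[of m] by simp
  qed
  show "m \<subseteq> ideal_prod G [m]"
    using ideal_mult_single[of _ m 1 G] assms(2) by auto
qed

definition comax :: "'a::ring_1 set \<Rightarrow> 'a set \<Rightarrow> bool" where
  "comax I J \<longleftrightarrow> (\<exists>x\<in>I. \<exists>y\<in>J. x + y = 1)"

lemma comax_maximal:
  assumes G: "subalgebra scale G" and m: "maximal_ideal G m" and m': "maximal_ideal G m'" and ne: "m \<noteq> m'"
  shows "comax m m'"
proof -
  define J where "J = {x + y | x y. x \<in> m \<and> y \<in> m'}"
  have im: "two_sided_ideal G m" and im': "two_sided_ideal G m'" using m m' unfolding maximal_ideal_def by auto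
  have Gc: "\<forall>x\<in>G. \<forall>y\<in>G. x + y \<in> G \<and> x * y \<in> G" and G1: "1 \<in> G"
    using G unfolding subalgebra_def by auto
  have mG: "m \<subseteq> G" and m0: "0 \<in> m" and madd: "\<forall>x\<in>m. \<forall>y\<in>m. x + y \<in> m"
    and mneg: "\<forall>x\<in>m. - x \<in> m" and mmul: "\<forall>g\<in>G. \<forall>x\<in>m. g * x \<in> m \<and> x * g \<in> m"
    using im unfolding two_sided_ideal_def by auto
  have mG': "m' \<subseteq> G" and m0': "0 \<in> m'" and madd': "\<forall>x\<in>m'. \<forall>y\<in>m'. x + y \<in> m'"
    and mneg': "\<forall>x\<in>m'. - x \<in> m'" and mmul': "\<forall>g\<in>G. \<forall>x\<in>m'. g * x \<in> m' \<and> x * g \<in> m'"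
    using im' unfolding two_sided_ideal_def by auto
  have JI: "a + b \<in> J" if "a \<in> m" "b \<in> m'" for a b using that unfolding J_def by blast
  have JE: "\<exists>a b. x = a + b \<and> a \<in> m \<and> b \<in> m'" if "x \<in> J" for x using that unfolding J_def by blast
  have J1: "J \<subseteq> G"
  proof
    fix z assume "z \<in> J"
    then obtain a b where "z = a + b" "a \<in> m" "b \<in> m'" using JE by blast
    then show "z \<in> G" using mG mG' Gc by blast
  qed
  have J2: "0 \<in> J" using JI[OF m0 m0'] by simp
  have J3: "x + y \<in> J" if xJ: "x \<in> J" and yJ: "y \<in> J" for x y
  proof -
    obtain a b where ab: "x = a + b" "a \<in> m" "b \<in> m'" using JE[OF xJ] by blast
    obtain c d where cd: "y = c + d" "c \<in> m" "d \<in> m'" using JE[OF yJ] by blast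
    note abcd = ab cd
    have "x + y = (a + c) + (b + d)" using abcd by (simp add: algebra_simps)
    moreover have "a + c \<in> m" "b + d \<in> m'" using madd madd' abcd by auto
    ultimately show ?thesis using JI by metis
  qed
  have J4: "- x \<in> J" if xJ: "x \<in> J" for x
  proof -
    obtain a b where ab: "x = a + b" "a \<in> m" "b \<in> m'" using JE[OF xJ] by blast
    have "- x = (-a) + (-b)" using ab by simp
    moreover have "- a \<in> m" "- b \<in> m'" using mneg mneg' ab by auto
    ultimately show ?thesis using JI by metis
  qed
  have J5: "g * x \<in> J \<and> x * g \<in> J" if g: "g \<in> G" and x: "x \<in> J" for g x
  proof -
    obtain a b where ab: "x = a + b" "a \<in> m" "b \<in> m'" using JE[OF x] by blast
    have "g * x = g * a + g * b" "x * g = a * g + b * g" using ab by (simp_all add: algebra_simps)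
    moreover have "g * a \<in> m" "a * g \<in> m" using mmul g ab by auto
    moreover have "g * b \<in> m'" "b * g \<in> m'" using mmul' g ab by auto
    ultimately show ?thesis using JI by metis
  qed
  have "two_sided_ideal G J"
    unfolding two_sided_ideal_def using J1 J2 J3 J4 J5 by blast
  moreover have "m \<subseteq> J" using JI[OF _ m0'] by force
  ultimately have "J = m \<or> J = G" using m unfolding maximal_ideal_def by blast
  moreover have "J \<noteq> m"
  proof
    assume "J = m"
    then have "m' \<subseteq> m" using JI[OF m0] by force
    then have "m = m' \<or> m = G" using m' im unfolding maximal_ideal_def by blast
    then show False using ne m unfolding maximal_ideal_def by blast
  qed
  ultimately have "1 \<in> J" using G1 by simp
  then obtain a b where "1 = a + b" "a \<in> m" "b \<in> m'" using JE by blast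
  then show ?thesis unfolding comax_def by metis
qed

lemma comax_prod_left:
  assumes G: "subalgebra scale G" and J: "wideal G J"
    and ms: "\<forall>m\<in>set ms. two_sided_ideal G m \<and> comax m J"
  shows "comax (ideal_prod G ms) J"
  using ms
proof (induction ms)
  case Nil
  have "1 \<in> G" using G unfolding subalgebra_def by simp
  moreover have "0 \<in> J" using J unfolding wideal_def by simp
  ultimately show ?case unfolding comax_def by (intro bexI[of _ 1] bexI[of _ 0]) auto
next
  case (Cons m ms)
  have mI: "two_sided_ideal G m" and cm: "comax m J" using Cons.prems by auto
  obtain x1 y1 where 1: "x1 \<in> m" "y1 \<in> J" "x1 + y1 = 1" using cm unfolding comax_def by blast
  have "comax (ideal_prod G ms) J" using Cons.IH Cons.prems by simp
  then obtain x2 y2 where 2: "x2 \<in> ideal_prod G ms" "y2 \<in> J" "x2 + y2 = 1" unfolding comax_def by blast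
  have "x1 * (x2 + y2) + y1 = 1" using 1 2 by simp
  then have e: "x1 * x2 + (x1 * y2 + y1) = 1" by (simp add: distrib_left add.assoc)
  have "x1 * x2 \<in> ideal_prod G (m # ms)" using 1 2 ideal_mult_single by simp
  moreover have x1G: "x1 \<in> G" using mI 1 unfolding two_sided_ideal_def by blast
  have "x1 * y2 \<in> J" using J x1G 2 unfolding wideal_def by blast
  then have "x1 * y2 + y1 \<in> J" using J 1 unfolding wideal_def by blast
  ultimately show ?case using e unfolding comax_def by blast
qed

lemma comax_prod_right:
  assumes G: "subalgebra scale G" and I: "two_sided_ideal G I"
    and ms: "\<forall>m\<in>set ms. two_sided_ideal G m \<and> comax I m"
  shows "comax I (ideal_prod G ms)"
  using ms
proof (induction ms)
  case Nil
  have "1 \<in> G" using G unfolding subalgebra_def by simp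
  moreover have "0 \<in> I" using I unfolding two_sided_ideal_def by simp
  ultimately show ?case unfolding comax_def by (intro bexI[of _ 0] bexI[of _ 1]) auto
next
  case (Cons m ms)
  have mI: "two_sided_ideal G m" and cm: "comax I m" using Cons.prems by auto
  obtain x1 y1 where 1: "x1 \<in> I" "y1 \<in> m" "x1 + y1 = 1" using cm unfolding comax_def by blast
  have "comax I (ideal_prod G ms)" using Cons.IH Cons.prems by simp
  then obtain x2 y2 where 2: "x2 \<in> I" "y2 \<in> ideal_prod G ms" "x2 + y2 = 1" unfolding comax_def by blast
  have "x1 + y1 * (x2 + y2) = 1" using 1 2 by simp
  then have e: "(y1 * x2 + x1) + y1 * y2 = 1" by (simp add: distrib_left algebra_simps)
  have "y1 * y2 \<in> ideal_prod G (m # ms)" using 1 2 ideal_mult_single by simp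
  moreover have y1G: "y1 \<in> G" using mI 1 unfolding two_sided_ideal_def by blast
  have "y1 * x2 \<in> I" using I y1G 2 unfolding two_sided_ideal_def by blast
  then have "y1 * x2 + x1 \<in> I" using I 1 unfolding two_sided_ideal_def by blast
  ultimately show ?case using e unfolding comax_def by blast
qed


context
  fixes act :: "'a::ring_1 \<Rightarrow> 'v::ab_group_add \<Rightarrow> 'v"
  assumes M: "A_module act"
begin

lemma act_add: "act (a + b) x = act a x + act b x" using M unfolding A_module_def by blast
lemma act_add_r: "act a (x + y) = act a x + act a y" using M unfolding A_module_def by blast
lemma act_mult: "act (a * b) x = act a (act b x)" using M unfolding A_module_def by blast
lemma act_one: "act 1 x = x" using M unfolding A_module_def by blast
lemma act_zero: "act 0 x = 0" using act_add[of 0 0 x] by simp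
lemma act_zero_r: "act a 0 = 0" using act_add_r[of a 0 0] by simp
lemma act_neg: "act (- a) x = - act a x"
  using act_add[of a "-a" x] act_zero by (metis neg_eq_iff_add_eq_0 add.right_inverse)
lemma act_neg_r: "act a (- x) = - act a x"
  using act_add_r[of a x "-x"] act_zero_r by (metis neg_eq_iff_add_eq_0 add.right_inverse)
lemma act_diff: "act (a - b) x = act a x - act b x"
  using act_add[of a "-b" x] act_neg by simp
lemma act_diff_r: "act a (x - y) = act a x - act a y"
  using act_add_r[of a x "-y"] act_neg_r by simp
lemma act_sum: "act (sum f S) x = (\<Sum>i\<in>S. act (f i) x)"
  by (induction S rule: infinite_finite_induct) (auto simp: act_zero act_add)
lemma act_sum_list_r: "act a (sum_list xs) = sum_list (map (act a) xs)"
  by (induction xs) (auto simp: act_zero_r act_add_r)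

end

definition zsub :: "('a::ring_1 \<Rightarrow> 'v::ab_group_add \<Rightarrow> 'v) \<Rightarrow> ('v \<Rightarrow> bool) \<Rightarrow> bool" where
  "zsub act z \<longleftrightarrow> z 0 \<and> (\<forall>x y. z x \<longrightarrow> z y \<longrightarrow> z (x + y)) \<and> (\<forall>x. z x \<longrightarrow> z (- x))
     \<and> (\<forall>a x. z x \<longrightarrow> z (act a x))"

lemma zsub_add: "zsub act z \<Longrightarrow> z x \<Longrightarrow> z y \<Longrightarrow> z (x + y)"
  unfolding zsub_def by blast

lemma zsub_act: "zsub act z \<Longrightarrow> z x \<Longrightarrow> z (act a x)"
  unfolding zsub_def by blast

lemma zsub_diff: "zsub act z \<Longrightarrow> z x \<Longrightarrow> z y \<Longrightarrow> z (x - y)"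
  unfolding zsub_def by (metis diff_conv_add_uminus)

lemma zsub_sum: "zsub act z \<Longrightarrow> (\<forall>i\<in>S. z (h i)) \<Longrightarrow> z (sum h S)"
  by (induction S rule: infinite_finite_induct) (auto simp: zsub_def)

lemma kill_ideal_mult:
  assumes M: "A_module act" and Z: "zsub act z" and t: "t \<in> ideal_mult UNIV I"
    and k: "\<forall>y\<in>I. z (act y x)"
  shows "z (act t x)"
proof -
  obtain n f g where tt: "t = (\<Sum>i<(n::nat). f i * g i)" "\<forall>i<n. g i \<in> I"
    using t unfolding ideal_mult_def by blast
  have "act t x = (\<Sum>i<n. act (f i) (act (g i) x))"
    unfolding tt act_sum[OF M] act_mult[OF M] ..
  moreover have "\<forall>i\<in>{..<n}. z (act (f i) (act (g i) x))"
    using tt(2) k Z unfolding zsub_def by blast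
  ultimately show ?thesis using zsub_sum[OF Z] by simp
qed

definition LBS :: "'a::ring_1 set \<Rightarrow> ('a \<Rightarrow> 'v::ab_group_add \<Rightarrow> 'v) \<Rightarrow> ('v \<Rightarrow> bool)
    \<Rightarrow> 'a set set set \<Rightarrow> 'v \<Rightarrow> bool" where
  "LBS G act z Cs u \<longleftrightarrow> (\<exists>L. (\<forall>p\<in>set L. fst p \<in> Cs \<and> snd p \<in> part G act z (fst p))
      \<and> z (u - sum_list (map snd L)))"

lemma LBS_z: "z u \<Longrightarrow> LBS G act z Cs u"
  unfolding LBS_def by (rule exI[of _ "[]"]) simp

lemma LBS_add:
  assumes Z: "zsub act z" and "LBS G act z Cs x" "LBS G act z Cs y"
  shows "LBS G act z Cs (x + y)"
proof -
  obtain L1 where 1: "\<forall>p\<in>set L1. fst p \<in> Cs \<and> snd p \<in> part G act z (fst p)"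
     "z (x - sum_list (map snd L1))" using assms(2) unfolding LBS_def by blast
  obtain L2 where 2: "\<forall>p\<in>set L2. fst p \<in> Cs \<and> snd p \<in> part G act z (fst p)"
     "z (y - sum_list (map snd L2))" using assms(3) unfolding LBS_def by blast
  have "x + y - sum_list (map snd (L1 @ L2)) = (x - sum_list (map snd L1)) + (y - sum_list (map snd L2))"
    by simp
  then have "z (x + y - sum_list (map snd (L1 @ L2)))" using 1 2 Z unfolding zsub_def by metis
  then show ?thesis unfolding LBS_def using 1 2 by (intro exI[of _ "L1 @ L2"]) auto
qed

lemma LBS_sum_list:
  assumes Z: "zsub act z" shows "\<forall>x\<in>set xs. LBS G act z Cs x \<Longrightarrow> LBS G act z Cs (sum_list xs)"
  by (induction xs) (auto intro: LBS_add[OF Z] LBS_z simp: Z[unfolded zsub_def])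

lemma block_sum_LBS:
  assumes "u \<in> block_sum G act z Cs" shows "LBS G act z Cs u"
proof -
  obtain Fs f where F: "finite Fs" "Fs \<subseteq> Cs" "\<forall>C\<in>Fs. f C \<in> part G act z C"
     "z (u - (\<Sum>C\<in>Fs. f C))" using assms unfolding block_sum_def by blast
  obtain xs where xs: "set xs = Fs" "distinct xs" using finite_distinct_list[OF F(1)] by blast
  have "sum_list (map snd (map (\<lambda>C. (C, f C)) xs)) = (\<Sum>C\<in>Fs. f C)"
    using xs by (simp add: sum_list_distinct_conv_sum_set comp_def)
  then show ?thesis unfolding LBS_def using F xs
    by (intro exI[of _ "map (\<lambda>C. (C, f C)) xs"]) auto
qed

lemma class_cfs: "equiv (cfs scale G) R \<Longrightarrow> C \<in> cfs scale G // R \<Longrightarrow> m \<in> C \<Longrightarrow> maximal_ideal G m"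
  using in_quotient_imp_subset unfolding cfs_def by blast

lemma words_wideal:
  assumes G: "subalgebra scale G" and E: "equiv (cfs scale G) R" and C: "C \<in> cfs scale G // R"
    and w: "w \<in> words G C"
  shows "wideal G w"
proof -
  obtain ms where "w = ideal_prod G ms" "set ms \<subseteq> C" using w unfolding words_def by blast
  then show ?thesis using wideal_prod[OF G] class_cfs[OF E C] unfolding maximal_ideal_def by blast
qed

lemma comax_words:
  assumes G: "subalgebra scale G" and E: "equiv (cfs scale G) R"
    and C: "C \<in> cfs scale G // R" and D: "D \<in> cfs scale G // R" and ne: "C \<noteq> D"
    and w: "w \<in> words G C" and w': "w' \<in> words G D"
  shows "comax w w'"
proof -
  obtain ms where ms: "w = ideal_prod G ms" "set ms \<subseteq> C" using w unfolding words_def by blast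
  obtain ms' where ms': "w' = ideal_prod G ms'" "set ms' \<subseteq> D" using w' unfolding words_def by blast
  have disj: "C \<inter> D = {}" using quotient_disj[OF E C D] ne by blast
  have "comax m w'" if "m \<in> set ms" for m
    unfolding ms'(1)
  proof (rule comax_prod_right[OF G])
    show "two_sided_ideal G m" using class_cfs[OF E C] that ms unfolding maximal_ideal_def by blast
    show "\<forall>m'\<in>set ms'. two_sided_ideal G m' \<and> comax m m'"
    proof
      fix m' assume m': "m' \<in> set ms'"
      have "maximal_ideal G m" "maximal_ideal G m'" using class_cfs[OF E C] class_cfs[OF E D] that ms ms' m' by blast+
      moreover have "m \<noteq> m'" using disj that ms m' ms' by blast
      ultimately show "two_sided_ideal G m' \<and> comax m m'"
        using comax_maximal[OF G] unfolding maximal_ideal_def by blast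
    qed
  qed
  then show ?thesis unfolding ms(1)
    using comax_prod_left[OF G words_wideal[OF G E D w']] class_cfs[OF E C] ms
    unfolding maximal_ideal_def by blast
qed


lemma indep:
  assumes M: "A_module act" and Z: "zsub act z" and G: "subalgebra scale G"
    and E: "equiv (cfs scale G) R"
    and C: "C \<in> cfs scale G // R" and Cs: "Cs \<subseteq> cfs scale G // R" and nC: "C \<notin> Cs"
    and w: "w \<in> words G C" and k: "\<forall>y\<in>w. z (act y u)" and L: "LBS G act z Cs u"
  shows "z u"
proof -
  obtain L where L: "\<forall>p\<in>set L. fst p \<in> Cs \<and> snd p \<in> part G act z (fst p)"
      "z (u - sum_list (map snd L))" using L unfolding LBS_def by blast
  have wI: "wideal G w" using words_wideal[OF G E C w] .
  show ?thesis using L k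
  proof (induction "length L" arbitrary: L u)
    case 0
    then show ?case by simp
  next
    case (Suc n L0)
    obtain p L where L0: "L0 = p # L" using Suc.hyps(2) by (cases L0) auto
    have lenL: "n = length L" using Suc.hyps(2) L0 by simp
    have prems: "\<forall>p\<in>set (p # L). fst p \<in> Cs \<and> snd p \<in> part G act z (fst p)"
       "z (u - sum_list (map snd (p # L)))" "\<forall>y\<in>w. z (act y u)" using Suc.prems L0 by auto
    obtain D g where p: "p = (D, g)" by (cases p)
    have D: "D \<in> Cs" and g: "g \<in> part G act z D" using prems p by auto
    obtain wD where wD: "wD \<in> words G D" "\<forall>y\<in>wD. z (act y g)" using g unfolding part_def by blast
    have DI: "wideal G wD" using words_wideal[OF G E _ wD(1)] D Cs by blast
    have "comax w wD" using comax_words[OF G E C _ _ w wD(1)] D Cs nC by blast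
    then obtain x y where xy: "x \<in> w" "y \<in> wD" "x + y = 1" unfolding comax_def by blast
    have yG: "y \<in> G" using xy DI unfolding wideal_def by blast
    have xG: "x \<in> G" using xy wI unfolding wideal_def by blast
    define L' where "L' = map (\<lambda>q. (fst q, act y (snd q))) L"
    have L'1: "\<forall>q\<in>set L'. fst q \<in> Cs \<and> snd q \<in> part G act z (fst q)"
    proof
      fix q assume "q \<in> set L'"
      then obtain q0 where q0: "q0 \<in> set L" "q = (fst q0, act y (snd q0))" unfolding L'_def by auto
      have "fst q0 \<in> Cs" and "snd q0 \<in> part G act z (fst q0)" using prems(1) q0 by auto
      then obtain w0 where w0: "w0 \<in> words G (fst q0)" "\<forall>t\<in>w0. z (act t (snd q0))"
        unfolding part_def by blast
      have "wideal G w0" using words_wideal[OF G E _ w0(1)] \<open>fst q0 \<in> Cs\<close> Cs by blast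
      then have "\<forall>t\<in>w0. z (act t (act y (snd q0)))"
        using w0(2) yG unfolding wideal_def act_mult[OF M, symmetric] by blast
      then show "fst q \<in> Cs \<and> snd q \<in> part G act z (fst q)"
        using q0 \<open>fst q0 \<in> Cs\<close> w0(1) unfolding part_def by auto
    qed
    have sL': "sum_list (map snd L') = act y (sum_list (map snd L))"
      unfolding L'_def act_sum_list_r[OF M] by (simp add: comp_def)
    have "act y u - sum_list (map snd L') = act y (u - sum_list (map snd (p # L))) + act y g"
      unfolding sL' p by (simp add: act_diff_r[OF M] act_add_r[OF M] algebra_simps)
    moreover have "z (act y (u - sum_list (map snd (p # L))))" using prems(2) Z unfolding zsub_def by blast
    moreover have "z (act y g)" using wD xy by blast
    ultimately have L'2: "z (act y u - sum_list (map snd L'))" using Z unfolding zsub_def by metis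
    have k': "\<forall>t\<in>w. z (act t (act y u))"
    proof
      fix t assume t: "t \<in> w"
      have "t * y = t - t * x" using xy by (metis add_diff_cancel_left' distrib_left mult.right_neutral)
      then have "act t (act y u) = act t u - act (t * x) u"
        by (simp add: act_mult[OF M, symmetric] act_diff[OF M])
      moreover have "t * x \<in> w" using wI t xG unfolding wideal_def by blast
      ultimately show "z (act t (act y u))" using prems(3) t zsub_diff[OF Z] by metis
    qed
    have "length L' = n" using lenL unfolding L'_def by simp
    then have zy: "z (act y u)" using Suc.hyps(1)[OF _ L'1 L'2 k'] by simp
    have zx: "z (act x u)" using prems(3) xy by blast
    have "u = act x u + act y u" using xy act_add[OF M, of x y u] act_one[OF M] by simp
    then show ?case using zx zy Z unfolding zsub_def by metis
  qed
qed

lemma single: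
  assumes M: "A_module act" and Z: "zsub act z" and G: "subalgebra scale G"
    and E: "equiv (cfs scale G) R" and HC: "HC_block_subalgebra scale G R"
    and m: "m \<in> cfs scale G" and k: "\<forall>y\<in>m. z (act y x)"
  shows "LBS G act z (Supp scale G R (*) (\<lambda>t. t \<in> ideal_mult UNIV m)) (act a x)"
proof -
  let ?z' = "\<lambda>t. t \<in> ideal_mult UNIV m"
  define B where "B = R `` {m}"
  have B: "B \<in> cfs scale G // R" unfolding B_def using m by (rule quotientI)
  have mB: "m \<in> B" unfolding B_def using E m unfolding equiv_def refl_on_def by blast
  have "two_sided_ideal G m" "1 \<in> G" using m G unfolding cfs_def maximal_ideal_def subalgebra_def by auto
  then have "m \<in> words G B" unfolding words_def using ideal_prod_single mB
    by (intro CollectI exI[of _ "[m]"]) auto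
  then have "a \<in> block_sum G (*) ?z' (cfs scale G // R)"
    using HC B unfolding HC_block_subalgebra_def block_module_def by blast
  then obtain Fs f where F: "finite Fs" "Fs \<subseteq> cfs scale G // R" "\<forall>C\<in>Fs. f C \<in> part G (*) ?z' C"
     "?z' (a - (\<Sum>C\<in>Fs. f C))" unfolding block_sum_def by blast
  define Fs' where "Fs' = {D\<in>Fs. \<not> ?z' (f D)}"
  have fin: "finite Fs'" using F(1) unfolding Fs'_def by simp
  have sub: "Fs' \<subseteq> Supp scale G R (*) ?z'" using F(2,3) unfolding Fs'_def Supp_def by blast
  have prt: "\<forall>D\<in>Fs'. act (f D) x \<in> part G act z D"
  proof
    fix D assume "D \<in> Fs'"
    then obtain w where w: "w \<in> words G D" "\<forall>y\<in>w. ?z' (y * f D)"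
      using F(3) unfolding Fs'_def part_def by blast
    have "\<forall>y\<in>w. z (act y (act (f D) x))"
      using w(2) kill_ideal_mult[OF M Z _ k] by (simp add: act_mult[OF M, symmetric])
    then show "act (f D) x \<in> part G act z D" using w(1) unfolding part_def by blast
  qed
  have ss: "sum f Fs = sum f Fs' + sum f (Fs - Fs')"
    using sum.subset_diff[OF _ F(1), of Fs' f] unfolding Fs'_def by auto
  have "act a x - (\<Sum>D\<in>Fs'. act (f D) x) = act (a - sum f Fs) x + (\<Sum>D\<in>Fs - Fs'. act (f D) x)"
    unfolding act_diff[OF M] act_sum[OF M, symmetric] ss act_add[OF M] by simp
  moreover have "z (act (a - sum f Fs) x)" using kill_ideal_mult[OF M Z F(4) k] .
  moreover have "z (\<Sum>D\<in>Fs - Fs'. act (f D) x)"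
    by (rule zsub_sum[OF Z]) (use kill_ideal_mult[OF M Z _ k] in \<open>auto simp: Fs'_def\<close>)
  ultimately have "z (act a x - (\<Sum>D\<in>Fs'. act (f D) x))" using zsub_add[OF Z] by simp
  then have "act a x \<in> block_sum G act z (Supp scale G R (*) ?z')"
    unfolding block_sum_def using fin sub prt by (intro CollectI exI[of _ Fs'] exI[of _ "\<lambda>D. act (f D) x"]) blast
  then show ?thesis by (rule block_sum_LBS)
qed


lemma Qlem:
  assumes M: "A_module act" and G: "subalgebra scale G"
    and E: "equiv (cfs scale G) R" and HC: "HC_block_subalgebra scale G R"
    and B: "B \<in> cfs scale G // R"
  shows "set ms \<subseteq> B \<Longrightarrow> zsub act z \<Longrightarrow> \<forall>x\<in>ideal_prod G ms. z (act x v) \<Longrightarrow>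
    C \<in> cfs scale G // R \<Longrightarrow>
    C \<notin> (\<Union>m \<in> set ms. Supp scale G R (*) (\<lambda>x. x \<in> ideal_mult UNIV m)) \<Longrightarrow>
    w \<in> words G C \<Longrightarrow> \<forall>y\<in>w. z (act y (act f v)) \<Longrightarrow> z (act f v)"
proof (induction ms arbitrary: z)
  case Nil
  have "1 \<in> G" using G unfolding subalgebra_def by blast
  then have "z v" using Nil act_one[OF M] by fastforce
  then show ?case using Nil unfolding zsub_def by blast
next
  case (Cons m ms)
  let ?P = "ideal_prod G ms"
  define z2 where "z2 y \<longleftrightarrow> (\<exists>ps. (\<forall>q\<in>set ps. snd q \<in> ?P) \<and>
      z (y - sum_list (map (\<lambda>q. act (fst q) (act (snd q) v)) ps)))" for y
  have Z: "zsub act z" using Cons.prems by blast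
  have Z2: "zsub act z2" unfolding zsub_def
  proof (intro conjI allI impI)
    show "z2 0" unfolding z2_def using Z unfolding zsub_def by (intro exI[of _ "[]"]) auto
  next
    fix x y assume "z2 x" "z2 y"
    then obtain p1 p2 where p1: "\<forall>q\<in>set p1. snd q \<in> ?P" "z (x - sum_list (map (\<lambda>q. act (fst q) (act (snd q) v)) p1))"
      and p2: "\<forall>q\<in>set p2. snd q \<in> ?P" "z (y - sum_list (map (\<lambda>q. act (fst q) (act (snd q) v)) p2))"
      unfolding z2_def by blast
    have "x + y - sum_list (map (\<lambda>q. act (fst q) (act (snd q) v)) (p1 @ p2)) =
       (x - sum_list (map (\<lambda>q. act (fst q) (act (snd q) v)) p1)) + (y - sum_list (map (\<lambda>q. act (fst q) (act (snd q) v)) p2))"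
      by simp
    note eq = this
    have "z (x + y - sum_list (map (\<lambda>q. act (fst q) (act (snd q) v)) (p1 @ p2)))" unfolding eq by (rule zsub_add[OF Z p1(2) p2(2)])
    then show "z2 (x + y)" unfolding z2_def using p1 p2
      by (intro exI[of _ "p1 @ p2"]) auto
  next
    fix x assume "z2 x"
    then obtain p1 where p1: "\<forall>q\<in>set p1. snd q \<in> ?P" "z (x - sum_list (map (\<lambda>q. act (fst q) (act (snd q) v)) p1))"
      unfolding z2_def by blast
    have neg: "sum_list (map (\<lambda>q. act (fst q) (act (snd q) v)) (map (\<lambda>q. (- fst q, snd q)) p1))
       = - sum_list (map (\<lambda>q. act (fst q) (act (snd q) v)) p1)" for p1
      by (induction p1) (auto simp: act_neg[OF M])
    have "- x - sum_list (map (\<lambda>q. act (fst q) (act (snd q) v)) (map (\<lambda>q. (- fst q, snd q)) p1))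
       = - (x - sum_list (map (\<lambda>q. act (fst q) (act (snd q) v)) p1))" unfolding neg by simp
    note eq = this
    have "z (- x - sum_list (map (\<lambda>q. act (fst q) (act (snd q) v)) (map (\<lambda>q. (- fst q, snd q)) p1)))" unfolding eq using Z p1(2) unfolding zsub_def by blast
    then show "z2 (- x)" unfolding z2_def using p1
      by (intro exI[of _ "map (\<lambda>q. (- fst q, snd q)) p1"]) auto
  next
    fix a x assume "z2 x"
    then obtain p1 where p1: "\<forall>q\<in>set p1. snd q \<in> ?P" "z (x - sum_list (map (\<lambda>q. act (fst q) (act (snd q) v)) p1))"
      unfolding z2_def by blast
    have mu: "sum_list (map (\<lambda>q. act (fst q) (act (snd q) v)) (map (\<lambda>q. (a * fst q, snd q)) p1))
       = act a (sum_list (map (\<lambda>q. act (fst q) (act (snd q) v)) p1))" for p1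
      by (induction p1) (auto simp: act_mult[OF M] act_add_r[OF M] act_zero_r[OF M])
    have "act a x - sum_list (map (\<lambda>q. act (fst q) (act (snd q) v)) (map (\<lambda>q. (a * fst q, snd q)) p1))
       = act a (x - sum_list (map (\<lambda>q. act (fst q) (act (snd q) v)) p1))" unfolding mu act_diff_r[OF M] ..
    note eq = this
    have "z (act a x - sum_list (map (\<lambda>q. act (fst q) (act (snd q) v)) (map (\<lambda>q. (a * fst q, snd q)) p1)))" unfolding eq by (rule zsub_act[OF Z p1(2)])
    then show "z2 (act a x)" unfolding z2_def using p1
      by (intro exI[of _ "map (\<lambda>q. (a * fst q, snd q)) p1"]) auto
  qed
  have zz2: "z y \<Longrightarrow> z2 y" for y unfolding z2_def by (intro exI[of _ "[]"]) auto
  have h1: "\<forall>x\<in>?P. z2 (act x v)"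
  proof
    fix x assume "x \<in> ?P"
    moreover have "act x v - sum_list (map (\<lambda>q. act (fst q) (act (snd q) v)) [(1, x)]) = 0"
      by (simp add: act_one[OF M])
    ultimately show "z2 (act x v)" unfolding z2_def using Z unfolding zsub_def
      by (intro exI[of _ "[(1, x)]"]) auto
  qed
  have "z2 (act f v)"
    using Cons.IH[OF _ Z2 h1] Cons.prems zz2 by auto
  then obtain ps where ps: "\<forall>q\<in>set ps. snd q \<in> ?P"
     "z (act f v - sum_list (map (\<lambda>q. act (fst q) (act (snd q) v)) ps))"
    unfolding z2_def by blast
  let ?S = "Supp scale G R (*) (\<lambda>x. x \<in> ideal_mult UNIV m)"
  have mc: "m \<in> cfs scale G" using Cons.prems(1) in_quotient_imp_subset[OF E B] by auto
  have "\<forall>x\<in>set (map (\<lambda>q. act (fst q) (act (snd q) v)) ps). LBS G act z ?S x"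
  proof
    fix x assume "x \<in> set (map (\<lambda>q. act (fst q) (act (snd q) v)) ps)"
    then obtain q where q: "q \<in> set ps" "x = act (fst q) (act (snd q) v)" by auto
    have "\<forall>y\<in>m. z (act y (act (snd q) v))"
    proof
      fix y assume "y \<in> m"
      moreover have "snd q \<in> ideal_prod G ms" using ps q by blast
      ultimately have "y * snd q \<in> ideal_prod G (m # ms)" using ideal_mult_single by simp
      then show "z (act y (act (snd q) v))" using Cons.prems(3) by (simp add: act_mult[OF M, symmetric])
    qed
    then show "LBS G act z ?S x" using single[OF M Z G E HC mc] q by blast
  qed
  then have "LBS G act z ?S (sum_list (map (\<lambda>q. act (fst q) (act (snd q) v)) ps))"
    by (rule LBS_sum_list[OF Z])
  moreover have "LBS G act z ?S (act f v - sum_list (map (\<lambda>q. act (fst q) (act (snd q) v)) ps))"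
    unfolding LBS_def by (rule exI[of _ "[]"]) (simp add: ps(2))
  ultimately have "LBS G act z ?S ((act f v - sum_list (map (\<lambda>q. act (fst q) (act (snd q) v)) ps))
      + sum_list (map (\<lambda>q. act (fst q) (act (snd q) v)) ps))"
    using LBS_add[OF Z] by (simp only: add.commute)
  then have L: "LBS G act z ?S (act f v)" by simp
  have Ssub: "?S \<subseteq> cfs scale G // R" unfolding Supp_def by blast
  show ?case using indep[OF M Z G E Cons.prems(4) Ssub _ Cons.prems(6) Cons.prems(7) L] Cons.prems(5) by auto
qed

theorem mainTheorem10:
  fixes scale :: "'k::field \<Rightarrow> 'a::ring_1 \<Rightarrow> 'a" and G :: "'a set"
    and R :: "('a set \<times> 'a set) set"
    and act :: "'a \<Rightarrow> 'v::ab_group_add \<Rightarrow> 'v" and v :: 'v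
    and B :: "'a set set" and ms :: "'a set list"
  assumes "k_algebra scale" and "subalgebra scale G"
    and "equiv (cfs scale G) R"
    and "HC_block_subalgebra scale G R"
    and "A_module act"
    and "B \<in> cfs scale G // R" and "set ms \<subseteq> B"
    and "\<forall>x \<in> ideal_prod G ms. act x v = 0"
  shows "\<forall>a. act a v \<in> block_sum G act (\<lambda>w. w = 0)
            (\<Union>m \<in> set ms. Supp scale G R (*) (\<lambda>x. x \<in> ideal_mult UNIV m))"
proof
  fix a
  note M = assms(5) and G = assms(2) and E = assms(3) and HC = assms(4)
  let ?S = "\<Union>m \<in> set ms. Supp scale G R (*) (\<lambda>x. x \<in> ideal_mult UNIV m)"
  let ?P = "ideal_prod G ms"
  let ?z' = "\<lambda>t. t \<in> ideal_mult UNIV ?P"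
  have Z: "zsub act (\<lambda>w. w = 0)" unfolding zsub_def by (auto simp: act_zero_r[OF M])
  have "?P \<in> words G B" unfolding words_def using assms(7) by blast
  then have "a \<in> block_sum G (*) ?z' (cfs scale G // R)"
    using HC assms(6) unfolding HC_block_subalgebra_def block_module_def by blast
  then obtain Fs f where F: "finite Fs" "Fs \<subseteq> cfs scale G // R" "\<forall>C\<in>Fs. f C \<in> part G (*) ?z' C"
     "?z' (a - (\<Sum>C\<in>Fs. f C))" unfolding block_sum_def by blast
  define Fs' where "Fs' = {D\<in>Fs. act (f D) v \<noteq> 0}"
  have fin: "finite Fs'" using F(1) unfolding Fs'_def by simp
  have prt: "\<forall>D\<in>Fs. act (f D) v \<in> part G act (\<lambda>w. w = 0) D \<and>
     (\<exists>w\<in>words G D. \<forall>y\<in>w. act y (act (f D) v) = 0)"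
  proof
    fix D assume "D \<in> Fs"
    then obtain w where w: "w \<in> words G D" "\<forall>y\<in>w. ?z' (y * f D)"
      using F(3) unfolding part_def by blast
    have "\<forall>y\<in>w. act y (act (f D) v) = 0"
      using w(2) kill_ideal_mult[OF M Z _ assms(8)] by (simp add: act_mult[OF M, symmetric])
    then show "act (f D) v \<in> part G act (\<lambda>w. w = 0) D \<and>
     (\<exists>w\<in>words G D. \<forall>y\<in>w. act y (act (f D) v) = 0)" using w(1) unfolding part_def by blast
  qed
  have sub: "Fs' \<subseteq> ?S"
  proof
    fix D assume D: "D \<in> Fs'"
    show "D \<in> ?S"
    proof (rule ccontr)
      assume nD: "D \<notin> ?S"
      obtain w where w: "w \<in> words G D" "\<forall>y\<in>w. act y (act (f D) v) = 0" using prt D unfolding Fs'_def by blast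
      have "act (f D) v = 0"
        using Qlem[OF M G E HC assms(6) assms(7) Z assms(8) _ nD w] D F(2) unfolding Fs'_def by blast
      then show False using D unfolding Fs'_def by blast
    qed
  qed
  have ss: "sum f Fs = sum f Fs' + sum f (Fs - Fs')"
    using sum.subset_diff[OF _ F(1), of Fs' f] unfolding Fs'_def by auto
  have "act a v - (\<Sum>D\<in>Fs'. act (f D) v) = act (a - sum f Fs) v + (\<Sum>D\<in>Fs - Fs'. act (f D) v)"
    unfolding act_diff[OF M] act_sum[OF M, symmetric] ss act_add[OF M] by simp
  moreover have "act (a - sum f Fs) v = 0" using kill_ideal_mult[OF M Z F(4) assms(8)] .
  moreover have "(\<Sum>D\<in>Fs - Fs'. act (f D) v) = 0" by (rule sum.neutral) (auto simp: Fs'_def)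
  ultimately have "act a v - (\<Sum>D\<in>Fs'. act (f D) v) = 0" by simp
  moreover have "\<forall>D\<in>Fs'. act (f D) v \<in> part G act (\<lambda>w. w = 0) D"
    using prt unfolding Fs'_def by blast
  ultimately show "act a v \<in> block_sum G act (\<lambda>w. w = 0) ?S"
    unfolding block_sum_def using fin sub
    by (intro CollectI exI[of _ Fs'] exI[of _ "\<lambda>D. act (f D) v"]) blast
qed

end
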